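(* There exists a finite constant $C=C(d)$ such that for any integer $\ell\ge2$ there exists a flow $\psi^\ell$ connecting $p_\ell$ to $p_{\ell-1}$, with support contained in $\Lambda_\ell$, such that $|\psi^\ell(x;b)|\le C\ell^{-d}$ for every $x\in\Lambda_\ell$ and every $b\in\mathcal B$.
   Context: $\mathcal B=\{e_1,\dots,e_d\}$ is the canonical basis of $\mathbb Z^d$; $\Lambda_\ell=\{0,1,\dots,\ell-1\}^d\subseteq\mathbb Z^d$; $p_\ell$ is the uniform probability measure on $\Lambda_\ell$. A flow is a function $\phi:\mathbb Z^d\times\mathcal B\to\mathbb R$; its support is contained in $\Lambda$ if $\phi(x;b)\ne0$ implies $\{x,x+b\}\subseteq\Lambda$. A flow $\phi$ connects $p$ to $q$ if $p(z)-q(z)=\sum_{b\in\mathcal B}(\phi(z;b)-\phi(z-b;b))$ for all $z\in\mathbb Z^d$. *)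

theory Defs
  imports "HOL-Analysis.Analysis"
begin

text \<open>Points of Z^d are int vectors indexed by a finite type 'd with CARD('d) = d.
  The canonical basis vector e_i is axis i 1; a flow is a function of a point and a basis index.\<close>

definition unit_vec :: "'d::finite \<Rightarrow> int ^ 'd" where
  "unit_vec i = axis i 1"

definition box :: "int \<Rightarrow> (int ^ 'd::finite) set" where
  "box l = {x. \<forall>i. 0 \<le> x $ i \<and> x $ i < l}"

definition unif :: "int \<Rightarrow> int ^ 'd::finite \<Rightarrow> real" where
  "unif l z = (if z \<in> box l then 1 / real (card (box l :: (int ^ 'd) set)) else 0)"

definition flow_support_in :: "(int ^ 'd::finite \<Rightarrow> 'd \<Rightarrow> real) \<Rightarrow> (int ^ 'd) set \<Rightarrow> bool" where
  "flow_support_in \<phi> L \<longleftrightarrow> (\<forall>x b. \<phi> x b \<noteq> 0 \<longrightarrow> x \<in> L \<and> x + unit_vec b \<in> L)"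

definition flow_connects :: "(int ^ 'd::finite \<Rightarrow> 'd \<Rightarrow> real) \<Rightarrow> (int ^ 'd \<Rightarrow> real) \<Rightarrow> (int ^ 'd \<Rightarrow> real) \<Rightarrow> bool" where
  "flow_connects \<phi> p q \<longleftrightarrow>
     (\<forall>z. p z - q z = (\<Sum>b\<in>UNIV. \<phi> z b - \<phi> (z - unit_vec b) b))"

end

theory Submission
  imports Defs
begin

definition uu :: "int \<Rightarrow> int \<Rightarrow> real" where
  "uu l t = (if 0 \<le> t \<and> t < l then 1 / real_of_int l else 0)"

definition ph :: "int \<Rightarrow> int \<Rightarrow> real" where
  "ph l t = (if 0 \<le> t \<and> t \<le> l - 2 then - real_of_int (t+1) / (real_of_int l * real_of_int (l-1)) else 0)"

lemma tele:
  fixes a b :: "nat \<Rightarrow> real"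
  shows "(\<Prod>i<n. a i) - (\<Prod>i<n. b i) =
    (\<Sum>k<n. (a k - b k) * (\<Prod>i<k. b i) * (\<Prod>i\<in>{k<..<n}. a i))"
proof (induction n)
  case 0
  then show ?case by simp
next
  case (Suc n)
  have e0: "{n<..<Suc n} = {}" by auto
  have e: "\<And>k. k < n \<Longrightarrow> {k<..<Suc n} = insert n {k<..<n}" by auto
  have "(\<Sum>k<Suc n. (a k - b k) * (\<Prod>i<k. b i) * (\<Prod>i\<in>{k<..<Suc n}. a i))
     = (\<Sum>k<n. (a k - b k) * (\<Prod>i<k. b i) * (\<Prod>i\<in>{k<..<Suc n}. a i)) + (a n - b n) * (\<Prod>i<n. b i)"
    by (simp add: e0)
  also have "(\<Sum>k<n. (a k - b k) * (\<Prod>i<k. b i) * (\<Prod>i\<in>{k<..<Suc n}. a i))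
     = a n * (\<Sum>k<n. (a k - b k) * (\<Prod>i<k. b i) * (\<Prod>i\<in>{k<..<n}. a i))"
    by (simp add: sum_distrib_left e mult_ac)
  finally show ?case using Suc by (simp add: algebra_simps)
qed

lemma ph_diff:
  assumes "l \<ge> 2"
  shows "ph l t - ph l (t-1) = uu l t - uu (l-1) t"
proof -
  have l1: "real_of_int l - 1 \<noteq> 0" "real_of_int l \<noteq> 0" using assms by auto
  have D: "1 / real_of_int l - 1 / (real_of_int l - 1) = - 1 / (real_of_int l * (real_of_int l - 1))"
    using l1 by (simp add: field_simps)
  have D2': "- real_of_int (t+1) - - real_of_int t = -1" by simp
  have D2: "- real_of_int (t+1) / (real_of_int l * (real_of_int l - 1)) - - real_of_int t / (real_of_int l * (real_of_int l - 1)) = - 1 / (real_of_int l * (real_of_int l - 1))"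
    by (metis diff_divide_distrib D2')
  consider "t < 0" | "t = 0" | "1 \<le> t \<and> t \<le> l - 2" | "t = l - 1" | "t \<ge> l" by linarith
  then show ?thesis
  proof cases
    case 1 then show ?thesis by (simp add: ph_def uu_def)
  next
    case 2 then show ?thesis using assms l1 by (simp add: ph_def uu_def field_simps)
  next
    case 3 then show ?thesis using assms D D2 by (simp add: ph_def uu_def)
  next
    case 4 then show ?thesis using assms l1 by (simp add: ph_def uu_def field_simps)
  next
    case 5 then show ?thesis using assms l1 by (simp add: ph_def uu_def field_simps)
  qed
qed

lemma card_box:
  assumes "l \<ge> 0"
  shows "card (box l :: (int ^ 'd::finite) set) = nat l ^ CARD('d)"
proof -
  have "box l = vec_lambda ` (PiE UNIV (\<lambda>_. {0..<l}) :: ('d \<Rightarrow> int) set)"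
  proof (rule set_eqI)
    fix x :: "int ^ 'd"
    show "x \<in> box l \<longleftrightarrow> x \<in> vec_lambda ` (PiE UNIV (\<lambda>_. {0..<l}))"
    proof
      assume "x \<in> box l"
      then have "vec_nth x \<in> PiE UNIV (\<lambda>_. {0..<l})" by (auto simp: box_def)
      then show "x \<in> vec_lambda ` (PiE UNIV (\<lambda>_. {0..<l}))"
        by (metis image_eqI vec_nth_inverse)
    next
      assume "x \<in> vec_lambda ` (PiE UNIV (\<lambda>_. {0..<l}))"
      then show "x \<in> box l" by (auto simp: box_def)
    qed
  qed
  moreover have "inj (vec_lambda :: ('d \<Rightarrow> int) \<Rightarrow> int ^ 'd)"
    by (simp add: inj_def)
  ultimately have "card (box l :: (int ^ 'd) set) = card (PiE UNIV (\<lambda>_::'d. {0..<l}))"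
    by (simp add: card_image inj_on_subset)
  also have "\<dots> = nat l ^ CARD('d)" by (simp add: card_PiE)
  finally show ?thesis .
qed

lemma unif_prod:
  assumes "l \<ge> 1"
  shows "unif l (z :: int ^ 'd::finite) = (\<Prod>i\<in>UNIV. uu l (z $ i))"
proof (cases "z \<in> box l")
  case True
  then have "(\<Prod>i\<in>UNIV. uu l (z $ i)) = (\<Prod>i\<in>(UNIV::'d set). 1 / real_of_int l)"
    by (intro prod.cong) (auto simp: uu_def box_def)
  then show ?thesis using True assms
    by (simp add: unif_def card_box power_one_over)
next
  case False
  then obtain i where "\<not> (0 \<le> z $ i \<and> z $ i < l)" by (auto simp: box_def)
  then have "uu l (z $ i) = 0" by (simp add: uu_def)
  then have "(\<Prod>i\<in>UNIV. uu l (z $ i)) = 0" by (meson UNIV_I finite prod_zero)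
  then show ?thesis using False by (simp add: unif_def)
qed

lemma uu_bnd: assumes "l \<ge> 2" shows "\<bar>uu l t\<bar> \<le> 2 / real_of_int l"
proof -
  have "1 / real_of_int l \<le> 2 / real_of_int l" using assms by (simp add: divide_right_mono)
  then show ?thesis using assms by (simp add: uu_def)
qed

lemma uu_bnd1: assumes "l \<ge> 2" shows "\<bar>uu (l-1) t\<bar> \<le> 2 / real_of_int l"
proof -
  have "1 / (real_of_int l - 1) \<le> 2 / real_of_int l" using assms by (simp add: field_simps)
  then show ?thesis using assms by (simp add: uu_def)
qed

lemma ph_bnd: assumes "l \<ge> 2" shows "\<bar>ph l t\<bar> \<le> 2 / real_of_int l"
proof (cases "0 \<le> t \<and> t \<le> l - 2")
  case True
  have p: "real_of_int l * (real_of_int l - 1) > 0" using assms by simp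
  have q: "real_of_int (t+1) \<le> real_of_int l - 1" using True by simp
  have "real_of_int (t+1) / (real_of_int l * (real_of_int l - 1)) \<le> (real_of_int l - 1) / (real_of_int l * (real_of_int l - 1))"
    by (rule divide_right_mono[OF q]) (use p in simp)
  also have "\<dots> = 1 / real_of_int l" using assms by simp
  also have "\<dots> \<le> 2 / real_of_int l" using assms by (simp add: divide_right_mono)
  finally have "real_of_int (t+1) / (real_of_int l * (real_of_int l - 1)) \<le> 2 / real_of_int l" .
  then show ?thesis using True assms by (simp add: ph_def add.commute)
next
  case False
  then show ?thesis using assms by (auto simp: ph_def)
qed

theorem lemmaG1:
  "\<exists>C::real. \<forall>l::int. l \<ge> 2 \<longrightarrow>
     (\<exists>\<psi> :: int ^ 'd::finite \<Rightarrow> 'd \<Rightarrow> real.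
        flow_connects \<psi> (unif l) (unif (l - 1)) \<and>
        flow_support_in \<psi> (box l) \<and>
        (\<forall>x\<in>box l. \<forall>b. \<bar>\<psi> x b\<bar> \<le> C * real_of_int l powi (- int CARD('d))))"
proof -
  define n where "n = CARD('d)"
  obtain s :: "nat \<Rightarrow> 'd" where s: "bij_betw s {..<n} UNIV"
    using ex_bij_betw_nat_finite[of "UNIV :: 'd set"] by (auto simp: n_def atLeast0LessThan)
  define r where "r = the_inv_into {..<n} s"
  have rs: "\<And>j. j < n \<Longrightarrow> r (s j) = j"
    using s unfolding r_def by (simp add: bij_betw_def the_inv_into_f_f)
  have sr: "\<And>i. s (r i) = i"
    using s unfolding r_def by (meson UNIV_I f_the_inv_into_f_bij_betw)
  have rn: "\<And>i. r i < n"
    using s unfolding r_def by (metis UNIV_I bij_betw_the_inv_into bij_betwE lessThan_iff)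
  define P where "P l x k = (\<Prod>j<r k. uu (l-1) (x $ s j)) * (\<Prod>j\<in>{r k<..<n}. uu l (x $ s j))"
    for l :: int and x :: "int ^ 'd" and k
  have Pshift: "P l (z - unit_vec b) b = P l z b" for l z b
  proof -
    have H: "unit_vec b $ s j = 0" if "j < n" "j \<noteq> r b" for j
    proof -
      have "s j \<noteq> b" using that rs by metis
      then show ?thesis by (simp add: unit_vec_def axis_def)
    qed
    have A: "(\<Prod>j<r b. uu (l-1) ((z - unit_vec b) $ s j)) = (\<Prod>j<r b. uu (l-1) (z $ s j))"
    proof (rule prod.cong[OF refl])
      fix j assume "j \<in> {..<r b}"
      then have "j < n" "j \<noteq> r b" using rn[of b] by auto
      then show "uu (l-1) ((z - unit_vec b) $ s j) = uu (l-1) (z $ s j)" by (simp add: H)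
    qed
    have B: "(\<Prod>j\<in>{r b<..<n}. uu l ((z - unit_vec b) $ s j)) = (\<Prod>j\<in>{r b<..<n}. uu l (z $ s j))"
    proof (rule prod.cong[OF refl])
      fix j assume "j \<in> {r b<..<n}"
      then have "j < n" "j \<noteq> r b" by auto
      then show "uu l ((z - unit_vec b) $ s j) = uu l (z $ s j)" by (simp add: H)
    qed
    show ?thesis unfolding P_def A B ..
  qed
  have zb: "(z - unit_vec b) $ b = z $ b - 1" for z :: "int ^ 'd" and b
    by (simp add: unit_vec_def)
  have ub: "unit_vec b $ b = (1::int)" for b :: 'd by (simp add: unit_vec_def)
  show ?thesis
  proof (intro exI allI impI)
    fix l :: int assume l: "l \<ge> 2"
    define \<psi> where "\<psi> x k = ph l (x $ k) * P l x k" for x k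
    show "flow_connects \<psi> (unif l) (unif (l - 1)) \<and> flow_support_in \<psi> (box l) \<and>
      (\<forall>x\<in>box l. \<forall>b. \<bar>\<psi> x b\<bar> \<le> 2 ^ n * real_of_int l powi (- int CARD('d)))"
    proof (intro conjI)
      show "flow_connects \<psi> (unif l) (unif (l - 1))"
        unfolding flow_connects_def
      proof
        fix z :: "int ^ 'd"
        have "(\<Sum>b\<in>UNIV. \<psi> z b - \<psi> (z - unit_vec b) b)
            = (\<Sum>b\<in>UNIV. (uu l (z $ b) - uu (l-1) (z $ b)) * P l z b)"
          unfolding \<psi>_def using l
          by (intro sum.cong refl) (simp add: Pshift ub ph_diff[symmetric] algebra_simps)
        also have "\<dots> = (\<Sum>j\<in>{..<n}. (uu l (z $ s j) - uu (l-1) (z $ s j)) * P l z (s j))"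
          using sum.reindex_bij_betw[OF s, of "\<lambda>b. (uu l (z $ b) - uu (l-1) (z $ b)) * P l z b"]
          by simp
        also have "\<dots> = (\<Sum>j<n. (uu l (z $ s j) - uu (l-1) (z $ s j)) * (\<Prod>i<j. uu (l-1) (z $ s i))
                 * (\<Prod>i\<in>{j<..<n}. uu l (z $ s i)))"
          by (intro sum.cong refl) (simp add: P_def rs mult.assoc)
        also have "\<dots> = (\<Prod>j<n. uu l (z $ s j)) - (\<Prod>j<n. uu (l-1) (z $ s j))"
          by (rule tele[symmetric])
        also have "\<dots> = (\<Prod>i\<in>UNIV. uu l (z $ i)) - (\<Prod>i\<in>UNIV. uu (l-1) (z $ i))"
          using prod.reindex_bij_betw[OF s, of "\<lambda>i. uu l (z $ i)"]
            prod.reindex_bij_betw[OF s, of "\<lambda>i. uu (l-1) (z $ i)"] by simp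
        also have "\<dots> = unif l z - unif (l-1) z"
          using l by (simp add: unif_prod)
        finally show "unif l z - unif (l - 1) z = (\<Sum>b\<in>UNIV. \<psi> z b - \<psi> (z - unit_vec b) b)" by simp
      qed
    next
      show "flow_support_in \<psi> (box l)"
        unfolding flow_support_in_def
      proof (intro allI impI)
        fix x b assume nz: "\<psi> x b \<noteq> 0"
        then have hb: "0 \<le> x $ b \<and> x $ b \<le> l - 2" by (auto simp: \<psi>_def ph_def split: if_splits)
        have hP: "P l x b \<noteq> 0" using nz by (auto simp: \<psi>_def)
        have oth: "0 \<le> x $ i \<and> x $ i < l" if "i \<noteq> b" for i
        proof -
          have "r i \<noteq> r b" using that sr by metis
          then consider "r i < r b" | "r i \<in> {r b<..<n}" using rn[of i] by fastforce
          then show ?thesis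
          proof cases
            case 1
            then have "uu (l-1) (x $ s (r i)) \<noteq> 0" using hP unfolding P_def by auto
            then show ?thesis by (simp add: sr uu_def split: if_splits)
          next
            case 2
            then have "uu l (x $ s (r i)) \<noteq> 0" using hP unfolding P_def by auto
            then show ?thesis by (simp add: sr uu_def split: if_splits)
          qed
        qed
        show "x \<in> box l \<and> x + unit_vec b \<in> box l"
        proof -
          have a1: "0 \<le> x $ i \<and> x $ i < l" for i using hb oth by (cases "i = b") auto
          have a2: "0 \<le> (x + unit_vec b) $ i \<and> (x + unit_vec b) $ i < l" for i
            using hb oth[of i] by (cases "i = b") (auto simp: unit_vec_def axis_def)
          show ?thesis using a1 a2 by (simp add: box_def)
        qed
      qed
    next
      show "\<forall>x\<in>box l. \<forall>b. \<bar>\<psi> x b\<bar> \<le> 2 ^ n * real_of_int l powi (- int CARD('d))"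
      proof (intro ballI allI)
        fix x b
        let ?c = "2 / real_of_int l"
        have "\<bar>\<psi> x b\<bar> = \<bar>ph l (x $ b)\<bar> * (\<Prod>j<r b. \<bar>uu (l-1) (x $ s j)\<bar>) * (\<Prod>j\<in>{r b<..<n}. \<bar>uu l (x $ s j)\<bar>)"
          by (simp add: \<psi>_def P_def abs_mult abs_prod)
        also have "\<dots> \<le> ?c * (\<Prod>j<r b. ?c) * (\<Prod>j\<in>{r b<..<n}. ?c)"
        proof -
          have p1: "\<bar>ph l (x $ b)\<bar> \<le> ?c" by (rule ph_bnd[OF l])
          have p2: "(\<Prod>j<r b. \<bar>uu (l-1) (x $ s j)\<bar>) \<le> (\<Prod>j<r b. ?c)"
            by (intro prod_mono conjI abs_ge_zero uu_bnd1[OF l])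
          have p3: "(\<Prod>j\<in>{r b<..<n}. \<bar>uu l (x $ s j)\<bar>) \<le> (\<Prod>j\<in>{r b<..<n}. ?c)"
            by (intro prod_mono conjI abs_ge_zero uu_bnd[OF l])
          have c0: "?c \<ge> 0" using l by simp
          have "\<bar>ph l (x $ b)\<bar> * (\<Prod>j<r b. \<bar>uu (l-1) (x $ s j)\<bar>) \<le> ?c * (\<Prod>j<r b. ?c)"
            by (rule mult_mono[OF p1 p2 c0]) (simp add: prod_nonneg)
          then show ?thesis
            by (rule mult_mono[OF _ p3]) (use c0 in \<open>simp_all add: prod_nonneg\<close>)
        qed
        also have "\<dots> = ?c ^ (1 + r b + (n - Suc (r b)))"
          by (simp add: power_add)
        also have "1 + r b + (n - Suc (r b)) = n" using rn[of b] by simp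
        also have "?c ^ n = 2 ^ n * real_of_int l powi (- int CARD('d))"
          by (simp add: n_def power_int_minus power_divide divide_inverse power_inverse)
        finally show "\<bar>\<psi> x b\<bar> \<le> 2 ^ n * real_of_int l powi (- int CARD('d))" .
      qed
    qed
  qed
qed

end
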